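(* Let $\Pi$ be a finite nonempty set of policies, $\Theta^T$ a finite nonempty set of environment parameterizations, and $U^{\vec\theta}(\pi)\in\mathbb{R}$ the utility of $\pi$ under $\vec\theta$. Then there exists an environment policy $\Lambda:\Pi\to\Delta(\Theta^T)$ such that $$\arg\max_{\pi\in\Pi}\ \mathbb{E}_{\vec\theta\sim\Lambda(\pi)}\big[U^{\vec\theta}(\pi)\big]=\textsc{MinimaxRegret}.$$
   Context: $\Delta(\Theta^T)$ denotes the set of probability distributions on $\Theta^T$. Regret: $\textsc{Regret}(\pi,\vec\theta)=\max_{\pi^B\in\Pi}\{U^{\vec\theta}(\pi^B)-U^{\vec\theta}(\pi)\}$. Minimax regret policies: $\textsc{MinimaxRegret}=\arg\min_{\pi\in\Pi}\max_{\vec\theta\in\Theta^T}\textsc{Regret}(\pi,\vec\theta)$. *)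

theory Defs
  imports "HOL-Probability.Probability"
begin

definition regret :: "'p set \<Rightarrow> ('t \<Rightarrow> 'p \<Rightarrow> real) \<Rightarrow> 'p \<Rightarrow> 't \<Rightarrow> real" where
  "regret Pol U p th = Max ((\<lambda>pB. U th pB - U th p) ` Pol)"

definition max_regret :: "'p set \<Rightarrow> 't set \<Rightarrow> ('t \<Rightarrow> 'p \<Rightarrow> real) \<Rightarrow> 'p \<Rightarrow> real" where
  "max_regret Pol Theta U p = Max (regret Pol U p ` Theta)"

definition minimax_regret :: "'p set \<Rightarrow> 't set \<Rightarrow> ('t \<Rightarrow> 'p \<Rightarrow> real) \<Rightarrow> 'p set" where
  "minimax_regret Pol Theta U =
     {p \<in> Pol. \<forall>q \<in> Pol. max_regret Pol Theta U p \<le> max_regret Pol Theta U q}"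

definition arg_max_set :: "'p set \<Rightarrow> ('p \<Rightarrow> real) \<Rightarrow> 'p set" where
  "arg_max_set Pol f = {p \<in> Pol. \<forall>q \<in> Pol. f q \<le> f p}"

end

theory Submission
  imports Defs
begin

lemma mix_pmf:
  fixes g :: "'t \<Rightarrow> real"
  assumes "g t1 \<le> x" "x \<le> g t2"
  shows "\<exists>M. set_pmf M \<subseteq> {t1, t2} \<and> measure_pmf.expectation M g = x"
proof (cases "g t1 = g t2")
  case True
  then have "x = g t1" using assms by linarith
  then show ?thesis by (intro exI[of _ "return_pmf t1"]) auto
next
  case False
  define l where "l = (g t2 - x) / (g t2 - g t1)"
  have d: "g t2 - g t1 > 0" using assms False by linarith
  have l0: "0 \<le> l" "l \<le> 1" using assms d by (auto simp: l_def field_simps)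
  let ?M = "map_pmf (\<lambda>b. if b then t1 else t2) (bernoulli_pmf l)"
  have "measure_pmf.expectation ?M g = g t1 * l + g t2 * (1 - l)"
    using l0 by simp
  also have "\<dots> = g t2 - l * (g t2 - g t1)" by (simp add: algebra_simps)
  also have "l * (g t2 - g t1) = g t2 - x" using d by (simp add: l_def)
  finally have "measure_pmf.expectation ?M g = x" by simp
  then show ?thesis by (intro exI[of _ ?M]) auto
qed

lemma regret_le:
  assumes "finite Pol" "\<And>q. q \<in> Pol \<Longrightarrow> True" "U t a \<le> U t p"
  shows "regret Pol U p t \<le> regret Pol U a t"
proof (cases "Pol = {}")
  case True then show ?thesis by (simp add: regret_def)
next
  case False
  have "regret Pol U p t \<in> (\<lambda>pB. U t pB - U t p) ` Pol"
    unfolding regret_def using assms False by (intro Max_in) auto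
  then obtain q where q: "q \<in> Pol" "regret Pol U p t = U t q - U t p" by auto
  have "U t q - U t a \<le> regret Pol U a t"
    unfolding regret_def using assms q by (intro Max_ge) auto
  then show ?thesis using q assms by linarith
qed

lemma regret_less:
  assumes "finite Pol" "Pol \<noteq> {}" "U t a < U t p"
  shows "regret Pol U p t < regret Pol U a t"
proof -
  have "regret Pol U p t \<in> (\<lambda>pB. U t pB - U t p) ` Pol"
    unfolding regret_def using assms by (intro Max_in) auto
  then obtain q where q: "q \<in> Pol" "regret Pol U p t = U t q - U t p" by auto
  have "U t q - U t a \<le> regret Pol U a t"
    unfolding regret_def using assms q by (intro Max_ge) auto
  then show ?thesis using q assms by linarith
qed

lemma mr_le:
  assumes "finite Pol" "finite Theta" "Theta \<noteq> {}" "\<And>t. t \<in> Theta \<Longrightarrow> U t a \<le> U t p"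
  shows "max_regret Pol Theta U p \<le> max_regret Pol Theta U a"
proof -
  have "max_regret Pol Theta U p \<in> regret Pol U p ` Theta"
    unfolding max_regret_def using assms by (intro Max_in) auto
  then obtain t where t: "t \<in> Theta" "max_regret Pol Theta U p = regret Pol U p t" by auto
  have "regret Pol U p t \<le> regret Pol U a t" by (rule regret_le) (use assms t in auto)
  also have "\<dots> \<le> max_regret Pol Theta U a"
    unfolding max_regret_def using assms t by (intro Max_ge) auto
  finally show ?thesis using t by simp
qed

lemma mr_less:
  assumes "finite Pol" "Pol \<noteq> {}" "finite Theta" "Theta \<noteq> {}"
    "\<And>t. t \<in> Theta \<Longrightarrow> U t a < U t p"
  shows "max_regret Pol Theta U p < max_regret Pol Theta U a"
proof -
  have "max_regret Pol Theta U p \<in> regret Pol U p ` Theta"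
    unfolding max_regret_def using assms by (intro Max_in) auto
  then obtain t where t: "t \<in> Theta" "max_regret Pol Theta U p = regret Pol U p t" by auto
  have "regret Pol U p t < regret Pol U a t" by (rule regret_less) (use assms t in auto)
  also have "\<dots> \<le> max_regret Pol Theta U a"
    unfolding max_regret_def using assms t by (intro Max_ge) auto
  finally show ?thesis using t by simp
qed

theorem theorem4:
  fixes Pol :: "'p set" and Theta :: "'t set" and U :: "'t \<Rightarrow> 'p \<Rightarrow> real"
  assumes "finite Pol" "Pol \<noteq> {}" "finite Theta" "Theta \<noteq> {}"
  shows "\<exists>Lambda :: 'p \<Rightarrow> 't pmf.
           (\<forall>p \<in> Pol. set_pmf (Lambda p) \<subseteq> Theta) \<and>
           arg_max_set Pol (\<lambda>p. measure_pmf.expectation (Lambda p) (\<lambda>th. U th p))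
             = minimax_regret Pol Theta U"
proof -
  define M where "M = minimax_regret Pol Theta U"
  define MR where "MR = max_regret Pol Theta U"
  define lo where "lo p = Min ((\<lambda>t. U t p) ` Theta)" for p
  define hi where "hi p = Max ((\<lambda>t. U t p) ` Theta)" for p
  have fin: "finite ((\<lambda>t. U t p) ` Theta)" "(\<lambda>t. U t p) ` Theta \<noteq> {}" for p
    using assms by auto
  have lo_le: "t \<in> Theta \<Longrightarrow> lo p \<le> U t p" for t p
    unfolding lo_def using fin by (intro Min_le) auto
  have hi_ge: "t \<in> Theta \<Longrightarrow> U t p \<le> hi p" for t p
    unfolding hi_def using fin by (intro Max_ge) auto
  have "\<forall>p. \<exists>t. t \<in> Theta \<and> U t p = lo p"
  proof
    fix p
    have "lo p \<in> (\<lambda>t. U t p) ` Theta" unfolding lo_def using fin by (rule Min_in)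
    then show "\<exists>t. t \<in> Theta \<and> U t p = lo p" by auto
  qed
  then obtain tlo where tlo: "\<And>p. tlo p \<in> Theta \<and> U (tlo p) p = lo p" by metis
  have "\<forall>p. \<exists>t. t \<in> Theta \<and> U t p = hi p"
  proof
    fix p
    have "hi p \<in> (\<lambda>t. U t p) ` Theta" unfolding hi_def using fin by (rule Max_in)
    then show "\<exists>t. t \<in> Theta \<and> U t p = hi p" by auto
  qed
  then obtain thi where thi: "\<And>p. thi p \<in> Theta \<and> U (thi p) p = hi p" by metis
  have MRfin: "finite (MR ` Pol)" "MR ` Pol \<noteq> {}" using assms by auto
  obtain a0 where a0: "a0 \<in> Pol" "MR a0 = Min (MR ` Pol)"
    using Min_in[OF MRfin] by auto
  have a0M: "a0 \<in> M" unfolding M_def minimax_regret_def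
    using a0 MRfin MR_def by (auto intro: Min_le)
  have Msub: "M \<subseteq> Pol" unfolding M_def minimax_regret_def by auto
  have Mfin: "finite (hi ` M)" "hi ` M \<noteq> {}" using a0M Msub assms finite_subset by auto
  define c where "c = Min (hi ` M)"
  have c_le: "a \<in> M \<Longrightarrow> c \<le> hi a" for a unfolding c_def using Mfin by (intro Min_le) auto
  obtain a1 where a1: "a1 \<in> M" "c = hi a1" using Min_in[OF Mfin] c_def by auto
  have inM: "p \<in> M \<longleftrightarrow> p \<in> Pol \<and> (\<forall>q\<in>Pol. MR p \<le> MR q)" for p
    unfolding M_def minimax_regret_def MR_def by auto
  have lo_c: "lo b \<le> c" if "b \<in> M" for b
  proof (rule ccontr)
    assume "\<not> lo b \<le> c"
    then have "\<And>t. t \<in> Theta \<Longrightarrow> U t a1 < U t b"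
      using hi_ge[of _ a1] lo_le[of _ b] a1 by fastforce
    then have "MR b < MR a1" unfolding MR_def using mr_less[of Pol Theta U a1 b] assms by auto
    moreover have "MR a1 \<le> MR b" using inM that a1 Msub by auto
    ultimately show False by simp
  qed
  have notM: "lo p < c" if "p \<in> Pol" "p \<notin> M" for p
  proof (rule ccontr)
    assume "\<not> lo p < c"
    then have "\<And>t. t \<in> Theta \<Longrightarrow> U t a1 \<le> U t p"
      using hi_ge[of _ a1] lo_le[of _ p] a1 by fastforce
    then have "MR p \<le> MR a1" unfolding MR_def using mr_le[of Pol Theta U a1 p] assms by auto
    moreover have "\<forall>q\<in>Pol. MR a1 \<le> MR q" using inM a1 by blast
    ultimately have "p \<in> M" using inM that by fastforce
    then show False using that by simp
  qed
  define v where "v p = (if p \<in> M then c else lo p)" for p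
  have "\<forall>p. \<exists>L. (p \<in> Pol \<longrightarrow> set_pmf L \<subseteq> Theta) \<and>
          measure_pmf.expectation L (\<lambda>th. U th p) = v p"
  proof
    fix p
    show "\<exists>L. (p \<in> Pol \<longrightarrow> set_pmf L \<subseteq> Theta) \<and>
          measure_pmf.expectation L (\<lambda>th. U th p) = v p"
    proof (cases "p \<in> M")
      case True
      have "U (tlo p) p \<le> c" "c \<le> U (thi p) p" using tlo thi lo_c c_le True by auto
      from mix_pmf[of "\<lambda>th. U th p", OF this] obtain L where
        "set_pmf L \<subseteq> {tlo p, thi p}" "measure_pmf.expectation L (\<lambda>th. U th p) = c" by blast
      then show ?thesis using tlo thi True v_def by (intro exI[of _ L]) auto
    next
      case False
      then show ?thesis using tlo v_def
        by (intro exI[of _ "return_pmf (tlo p)"]) auto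
    qed
  qed
  then obtain L where L: "\<And>p. (p \<in> Pol \<longrightarrow> set_pmf (L p) \<subseteq> Theta) \<and>
          measure_pmf.expectation (L p) (\<lambda>th. U th p) = v p" by metis
  have "arg_max_set Pol (\<lambda>p. measure_pmf.expectation (L p) (\<lambda>th. U th p)) = M"
  proof -
    have "arg_max_set Pol v = M"
      unfolding arg_max_set_def
    proof safe
      fix p assume p: "p \<in> Pol" "\<forall>q\<in>Pol. v q \<le> v p"
      show "p \<in> M"
      proof (rule ccontr)
        assume "p \<notin> M"
        then have "v p < v a0" using notM p a0M v_def by auto
        then show False using p a0 by force
      qed
    next
      fix p assume "p \<in> M" then show "p \<in> Pol" using Msub by auto
    next
      fix p q assume "p \<in> M" "q \<in> Pol"
      then show "v q \<le> v p" using notM v_def by force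
    qed
    moreover have "(\<lambda>p. measure_pmf.expectation (L p) (\<lambda>th. U th p)) = v"
      using L by auto
    ultimately show ?thesis by simp
  qed
  then show ?thesis using L M_def by blast
qed

end
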